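(* Assume (A1) and (A2). Consider the problem of maximizing expected revenue $\int_{\underline{\theta}}^{\overline{\theta}}p(\theta)f(\theta)\,d\theta$ over mechanisms $\theta\mapsto(x(\theta),p(\theta))$, where $x(\theta)$ is a probability distribution over allocations and $p(\theta)\in\mathbb{R}$, subject to: incentive compatibility $\mathbb{E}[u(x(\theta),\theta)]-p(\theta)\ge\mathbb{E}[u(x(\theta'),\theta)]-p(\theta')$ for all $\theta,\theta'$; individual rationality $\mathbb{E}[u(x(\theta),\theta)]-p(\theta)\ge0$ for all $\theta$; and $x(\underline{\theta})\ge x^e(\underline{\theta})$ almost surely. A revenue-maximizing mechanism for this problem gives each type $\theta$ the allocation \[ x^*(\theta)=\arg\max_{x\in[x^e(\underline{\theta}),\overline{x}]}\Big\{v(x)+x\Big(\theta-\frac{1-F(\theta)}{f(\theta)}\Big)\Big\}, \] under which each type consumes its entire allocation $x^*(\theta)$, and charges \[ p(\theta)=u(x^*(\theta),\theta)-\int_{\underline{\theta}}^{\theta}x^*(z)\,dz. \] The resulting optimal seller payoff is denoted $\pi^e(F)$.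
   Context: Fix $\underline{\theta}<\overline{\theta}$ and $0<\underline{x}<\overline{x}$. The buyer's private type $\theta\in[\underline{\theta},\overline{\theta}]$ has CDF $F$ with density $f$. (A1): $v:[0,\overline{x}]\to\mathbb{R}$ strictly concave, continuously differentiable, $v(0)=0$. For an allocation $x$, $u(x,\theta)=\max_{0\le x'\le x}[v(x')+\theta x']$ (free disposal; the buyer consumes the maximizer $x'$). $x^e(\theta)$ is the unique maximizer of $v(x')+\theta x'$ over $[0,\overline{x}]$. (A2): $0<m\le f\le M$ for constants $m,M$, and $\theta-\frac{1-F(\theta)}{f(\theta)}$ strictly increasing. No assumption relating $\underline{x}$ and $x^e(\underline{\theta})$, nor nonnegativity of virtual surplus, is imposed. *)

theory Defs
  imports "HOL-Probability.Probability"
begin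

definition strictly_concave_on :: "real set \<Rightarrow> (real \<Rightarrow> real) \<Rightarrow> bool" where
  "strictly_concave_on S v \<longleftrightarrow>
     (\<forall>x\<in>S. \<forall>y\<in>S. \<forall>t. x \<noteq> y \<and> 0 < t \<and> t < 1 \<longrightarrow>
        t * v x + (1 - t) * v y < v (t * x + (1 - t) * y))"

text \<open>Utility with free disposal: u(x,theta) = max over x' in [0,x] of v x' + theta x'.\<close>
definition util :: "(real \<Rightarrow> real) \<Rightarrow> real \<Rightarrow> real \<Rightarrow> real" where
  "util v x \<theta> = Sup ((\<lambda>x'. v x' + \<theta> * x') ` {0..x})"

definition xeff :: "(real \<Rightarrow> real) \<Rightarrow> real \<Rightarrow> real \<Rightarrow> real" where
  "xeff v xh \<theta> = (THE x. x \<in> {0..xh} \<and> (\<forall>y\<in>{0..xh}. v y + \<theta> * y \<le> v x + \<theta> * x))"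

definition EU :: "(real \<Rightarrow> real) \<Rightarrow> real measure \<Rightarrow> real \<Rightarrow> real" where
  "EU v X \<theta> = (\<integral>a. util v a \<theta> \<partial>X)"

definition feasible ::
  "real \<Rightarrow> real \<Rightarrow> real \<Rightarrow> (real \<Rightarrow> real) \<Rightarrow> (real \<Rightarrow> real measure) \<Rightarrow> (real \<Rightarrow> real) \<Rightarrow> bool" where
  "feasible tlo thi xh v X p \<longleftrightarrow>
     (\<forall>\<theta>\<in>{tlo..thi}. prob_space (X \<theta>) \<and> sets (X \<theta>) = sets borel \<and>
                    (AE a in X \<theta>. a \<in> {0..xh})) \<and>
     (\<forall>\<theta>\<in>{tlo..thi}. \<forall>\<theta>'\<in>{tlo..thi}. EU v (X \<theta>) \<theta> - p \<theta> \<ge> EU v (X \<theta>') \<theta> - p \<theta>') \<and>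
     (\<forall>\<theta>\<in>{tlo..thi}. EU v (X \<theta>) \<theta> - p \<theta> \<ge> 0) \<and>
     (AE a in X tlo. xeff v xh tlo \<le> a)"

definition revenue :: "real \<Rightarrow> real \<Rightarrow> (real \<Rightarrow> real) \<Rightarrow> (real \<Rightarrow> real) \<Rightarrow> real" where
  "revenue tlo thi f p = integral {tlo..thi} (\<lambda>\<theta>. p \<theta> * f \<theta>)"

end

theory Submission
  imports Defs
begin

definition amax :: "(real \<Rightarrow> real) \<Rightarrow> real \<Rightarrow> real \<Rightarrow> real \<Rightarrow> real \<Rightarrow> bool" where
  "amax v lo hi c x \<longleftrightarrow> x \<in> {lo..hi} \<and> (\<forall>y\<in>{lo..hi}. v y + c * y \<le> v x + c * x)"

lemma sc_lin:
  assumes "strictly_concave_on {0..xh} v" "x \<in> {0..xh}" "y \<in> {0..xh}" "x \<noteq> y" "0 < t" "t < 1"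
  shows "t * (v x + c*x) + (1 - t) * (v y + c*y) < v (t * x + (1 - t) * y) + c * (t * x + (1 - t) * y)"
proof -
  have "t * v x + (1 - t) * v y < v (t * x + (1 - t) * y)"
    using assms unfolding strictly_concave_on_def by blast
  then show ?thesis by (simp add: algebra_simps)
qed

lemma amax_exists:
  assumes "continuous_on {0..xh} v" "0 \<le> lo" "lo \<le> hi" "hi \<le> xh"
  shows "\<exists>x. amax v lo hi c x"
proof -
  have "continuous_on {lo..hi} (\<lambda>y. v y + c * y)"
    by (intro continuous_intros continuous_on_subset[OF assms(1)]) (use assms in auto)
  then obtain x where "x \<in> {lo..hi}" "\<forall>y\<in>{lo..hi}. v y + c * y \<le> v x + c * x"
    using continuous_attains_sup[of "{lo..hi}" "\<lambda>y. v y + c * y"] assms by auto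
  then show ?thesis unfolding amax_def by blast
qed

lemma amax_strict:
  assumes "strictly_concave_on {0..xh} v" "0 \<le> lo" "hi \<le> xh" "amax v lo hi c x"
    "y \<in> {lo..hi}" "y \<noteq> x"
  shows "v y + c * y < v x + c * x"
proof (rule ccontr)
  assume "\<not> ?thesis"
  hence eq: "v y + c * y = v x + c * x" using assms(4,5) unfolding amax_def by force
  let ?m = "(1/2) * x + (1 - 1/2) * y"
  have "(1/2) * (v x + c*x) + (1 - 1/2) * (v y + c*y) < v ?m + c * ?m"
    by (rule sc_lin) (use assms in \<open>auto simp: amax_def\<close>)
  moreover have "?m \<in> {lo..hi}" using assms(4,5) by (auto simp: amax_def)
  ultimately show False using assms(4) eq unfolding amax_def by fastforce
qed

lemma amax_unique:
  assumes "strictly_concave_on {0..xh} v" "0 \<le> lo" "hi \<le> xh" "amax v lo hi c x" "amax v lo hi c x'"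
  shows "x = x'"
  using amax_strict[OF assms(1-4), of x'] amax_strict[OF assms(1-3,5), of x] assms(4,5)
  unfolding amax_def by force

lemma amax_mono:
  assumes "strictly_concave_on {0..xh} v" "0 \<le> lo" "hi \<le> xh"
    "amax v lo hi c1 x1" "amax v lo hi c2 x2" "c1 \<le> c2"
  shows "x1 \<le> x2"
proof (cases "c1 = c2")
  case True thus ?thesis using amax_unique[OF assms(1-4)] assms(5) by auto
next
  case False
  have "v x2 + c1 * x2 \<le> v x1 + c1 * x1" "v x1 + c2 * x1 \<le> v x2 + c2 * x2"
    using assms(4,5) unfolding amax_def by auto
  hence "(c2 - c1) * (x2 - x1) \<ge> 0" by (simp add: algebra_simps)
  moreover have "c2 - c1 > 0" using False assms(6) by simp
  ultimately show ?thesis by (simp add: zero_le_mult_iff)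
qed

lemma amax_between:
  assumes "strictly_concave_on {0..xh} v" "amax v 0 xh c x2" "x1 \<in> {0..xh}" "y \<in> {0..xh}"
    "x2 \<le> y \<and> y < x1 \<or> x1 < y \<and> y \<le> x2"
  shows "v x1 + c * x1 < v y + c * y"
proof (cases "y = x2")
  case True
  have "x1 \<noteq> x2" using assms(5) True by auto
  thus ?thesis using amax_strict[OF assms(1) _ _ assms(2), of x1] assms True by auto
next
  case False
  define t where "t = (x1 - y) / (x1 - x2)"
  have ne: "x1 \<noteq> x2" using assms(5) by auto
  have t: "0 < t" "t < 1" using assms(5) False unfolding t_def
    by (auto simp: divide_simps)
  have tt: "t * (x1 - x2) = x1 - y" unfolding t_def using ne by simp
  have y: "y = t * x2 + (1 - t) * x1" using tt by (simp add: algebra_simps)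
  have x2: "x2 \<in> {0..xh}" using assms(2) by (simp add: amax_def)
  have "t * (v x2 + c*x2) + (1 - t) * (v x1 + c*x1) < v y + c * y"
    unfolding y by (rule sc_lin) (use assms x2 ne t in auto)
  moreover have "v x1 + c * x1 \<le> v x2 + c * x2" using assms(2,3) by (auto simp: amax_def)
  moreover have "t * (v x1 + c*x1) \<le> t * (v x2 + c*x2)"
    using t calculation(2) by (intro mult_left_mono) auto
  ultimately show ?thesis by (simp add: algebra_simps)
qed


lemma tele_step:
  fixes D G :: "real \<Rightarrow> real" and k :: nat and a b h :: real
  assumes mono: "mono_on {a..b} G"
    and H: "\<And>s t. a \<le> s \<Longrightarrow> s \<le> t \<Longrightarrow> t \<le> b \<Longrightarrow> \<bar>D t - D s\<bar> \<le> (t - s) * (G t - G s)"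
    and h: "0 \<le> h"
  shows "real k * h \<le> b - a \<Longrightarrow> \<bar>D (a + k * h) - D a\<bar> \<le> h * (G (a + k*h) - G a)"
proof (induction k)
  case 0 thus ?case by simp
next
  case (Suc k)
  have kh: "real k * h \<le> real (Suc k) * h" using h by (simp add: algebra_simps)
  hence IH: "\<bar>D (a + k * h) - D a\<bar> \<le> h * (G (a + k*h) - G a)" using Suc by linarith
  have e: "a + real (Suc k) * h = (a + k * h) + h" by (simp add: algebra_simps)
  have "\<bar>D (a + real (Suc k) * h) - D (a + k * h)\<bar> \<le> h * (G (a + real (Suc k) * h) - G (a + k*h))"
    using H[of "a + k*h" "a + real (Suc k) * h"] Suc.prems kh h e by (simp add: zero_le_mult_iff)
  moreover have "h * (G (a + real (Suc k) * h) - G a) = h * (G (a + real (Suc k) * h) - G (a + k*h)) + h * (G (a + k*h) - G a)"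
    by (simp add: algebra_simps)
  ultimately show ?case using IH by linarith
qed

lemma tele:
  fixes D G :: "real \<Rightarrow> real" and a b :: real
  assumes ab: "a \<le> b" and mono: "mono_on {a..b} G"
    and H: "\<And>s t. a \<le> s \<Longrightarrow> s \<le> t \<Longrightarrow> t \<le> b \<Longrightarrow> \<bar>D t - D s\<bar> \<le> (t - s) * (G t - G s)"
  shows "D b = D a"
proof (rule ccontr)
  assume ne: "D b \<noteq> D a"
  define d where "d = \<bar>D b - D a\<bar>"
  have d: "d > 0" using ne unfolding d_def by auto
  define K where "K = (b - a) * (G b - G a)"
  have K: "K \<ge> 0" unfolding K_def using ab mono by (auto simp: mono_on_def)
  obtain n :: nat where n: "K / d < n" using reals_Archimedean2 by blast
  have npos: "n > 0" using n K d
    by (metis divide_nonneg_pos linorder_not_less of_nat_0_eq_iff order_le_less_trans zero_less_iff_neq_zero)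
  define h where "h = (b - a) / n"
  have h: "h \<ge> 0" unfolding h_def using ab by simp
  have nh: "real n * h = b - a" unfolding h_def using npos by simp
  have "\<bar>D (a + n * h) - D a\<bar> \<le> h * (G (a + n*h) - G a)"
    by (rule tele_step[OF mono H h]) (use nh in auto)
  hence "d \<le> K / n" unfolding d_def K_def h_def using nh npos by (simp add: h_def)
  hence "d * n \<le> K" using npos by (simp add: field_simps)
  moreover have "K < d * n" using n d by (simp add: field_simps)
  ultimately show False by linarith
qed

lemma integrable_mono_sub:
  fixes g :: "real \<Rightarrow> real"
  assumes "mono_on {a..b} g" "a \<le> s" "t \<le> b"
  shows "g integrable_on {s..t}"
  by (rule integrable_on_mono_on) (use assms in \<open>auto simp: mono_on_def\<close>)

lemma integral_const_bounds:
  fixes g :: "real \<Rightarrow> real"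
  assumes "g integrable_on {s..t}" "s \<le> t" "\<And>x. x \<in> {s..t} \<Longrightarrow> l \<le> g x \<and> g x \<le> u"
  shows "(t - s) * l \<le> integral {s..t} g \<and> integral {s..t} g \<le> (t - s) * u"
proof -
  have "integral {s..t} (\<lambda>x. l) \<le> integral {s..t} g"
    by (rule integral_le) (use assms in auto)
  moreover have "integral {s..t} g \<le> integral {s..t} (\<lambda>x. u)"
    by (rule integral_le) (use assms in auto)
  ultimately show ?thesis using assms(2) by (simp add: mult.commute)
qed

lemma subgrad_integral:
  fixes U g :: "real \<Rightarrow> real"
  assumes ab: "a \<le> b" and mono: "mono_on {a..b} g"
    and sub: "\<And>s t. s \<in> {a..b} \<Longrightarrow> t \<in> {a..b} \<Longrightarrow> U t \<ge> U s + (t - s) * g s"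
  shows "(g has_integral (U b - U a)) {a..b}"
proof -
  have gi: "g integrable_on {a..b}" by (rule integrable_on_mono_on[OF mono])
  define W where "W t = integral {a..t} g" for t
  define D where "D t = U t - W t" for t
  have "D b = D a"
  proof (rule tele[OF ab mono])
    fix s t assume st: "a \<le> s" "s \<le> t" "t \<le> b"
    have comb: "W s + integral {s..t} g = W t" unfolding W_def
      using Henstock_Kurzweil_Integration.integral_combine[where a=a and c=s and b=t and f=g] st integrable_mono_sub[OF mono, of a t] by auto
    have bnd: "(t - s) * g s \<le> integral {s..t} g \<and> integral {s..t} g \<le> (t - s) * g t"
      by (rule integral_const_bounds)
         (use st integrable_mono_sub[OF mono, of s t] mono in \<open>auto simp: mono_on_def\<close>)
    have u1: "U t \<ge> U s + (t - s) * g s" using sub st by auto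
    have u2: "U s \<ge> U t + (s - t) * g t" using sub st by auto
    show "\<bar>D t - D s\<bar> \<le> (t - s) * (g t - g s)"
      using comb bnd u1 u2 unfolding D_def abs_le_iff right_diff_distrib left_diff_distrib by linarith
  qed
  hence "W b = U b - U a" unfolding D_def W_def by simp
  thus ?thesis using gi unfolding W_def by (simp add: has_integral_iff)
qed


lemma comb3:
  fixes h :: "real \<Rightarrow> real"
  assumes "h integrable_on {a..b}" "a \<le> s" "s \<le> t" "t \<le> b"
  shows "integral {a..t} h = integral {a..s} h + integral {s..t} h"
  using Henstock_Kurzweil_Integration.integral_combine[where a=a and c=s and b=t and f=h]
    integrable_on_subinterval[OF assms(1), of a t] assms by auto

lemma bm_int:
  fixes h :: "real \<Rightarrow> real"
  assumes "h \<in> borel_measurable (lebesgue_on {a..b})" "\<And>x. x \<in> {a..b} \<Longrightarrow> \<bar>h x\<bar> \<le> B"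
  shows "h integrable_on {a..b}"
  by (rule measurable_bounded_by_integrable_imp_integrable[where g="\<lambda>_. B"]) (use assms in auto)

lemma bm_int_f:
  fixes h f :: "real \<Rightarrow> real"
  assumes "h \<in> borel_measurable (lebesgue_on {a..b})" "\<And>x. x \<in> {a..b} \<Longrightarrow> \<bar>h x\<bar> \<le> B"
    "f integrable_on {a..b}" "\<And>x. x \<in> {a..b} \<Longrightarrow> 0 \<le> f x"
  shows "(\<lambda>x. h x * f x) integrable_on {a..b}"
proof (rule measurable_bounded_by_integrable_imp_integrable[where g="\<lambda>x. B * f x"])
  show "(\<lambda>x. h x * f x) \<in> borel_measurable (lebesgue_on {a..b})"
    using assms(1) integrable_imp_measurable[OF assms(3)] by measurable
  show "(\<lambda>x. B * f x) integrable_on {a..b}" using assms(3) by (rule integrable_on_mult_right)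
  fix x assume x: "x \<in> {a..b}"
  have "\<bar>h x\<bar> * \<bar>f x\<bar> \<le> B * \<bar>f x\<bar>" using assms(2)[OF x] by (rule mult_right_mono) simp
  thus "norm (h x * f x) \<le> B * f x" using assms(4)[OF x] by (simp add: abs_mult)
qed auto

lemma mono_meas:
  fixes g :: "real \<Rightarrow> real"
  assumes "mono_on {a..b} g"
  shows "g \<in> borel_measurable (lebesgue_on {a..b})"
  by (rule integrable_imp_measurable[OF integrable_on_mono_on[OF assms]])

lemma cont_meas:
  fixes g :: "real \<Rightarrow> real"
  assumes "continuous_on {a..b} g"
  shows "g \<in> borel_measurable (lebesgue_on {a..b})"
  by (rule continuous_imp_measurable_on_sets_lebesgue[OF assms]) auto


lemma ibp:
  fixes g f :: "real \<Rightarrow> real" and a b K :: real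
  assumes ab: "a \<le> b" and gm: "mono_on {a..b} g" and gb: "\<And>x. x \<in> {a..b} \<Longrightarrow> 0 \<le> g x \<and> g x \<le> K"
    and fi: "f integrable_on {a..b}" and fp: "\<And>x. x \<in> {a..b} \<Longrightarrow> 0 \<le> f x"
    and F1: "integral {a..b} f = 1"
  shows "(\<lambda>\<theta>. integral {a..\<theta>} g * f \<theta>) integrable_on {a..b}"
    "(\<lambda>z. g z * (1 - integral {a..z} f)) integrable_on {a..b}"
    "integral {a..b} (\<lambda>\<theta>. integral {a..\<theta>} g * f \<theta>) = integral {a..b} (\<lambda>z. g z * (1 - integral {a..z} f))"
proof -
  define W where "W t = integral {a..t} g" for t
  define F where "F t = integral {a..t} f" for t
  have gi: "g integrable_on {a..b}" by (rule integrable_on_mono_on[OF gm])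
  have K0: "0 \<le> K" using gb[of a] ab by auto
  have Wc: "continuous_on {a..b} W" unfolding W_def by (rule indefinite_integral_continuous_1[OF gi])
  have Fc: "continuous_on {a..b} F" unfolding F_def by (rule indefinite_integral_continuous_1[OF fi])
  have Wd: "W t = W s + integral {s..t} g" if "a \<le> s" "s \<le> t" "t \<le> b" for s t
    unfolding W_def by (rule comb3[OF gi that])
  have Fd: "F t = F s + integral {s..t} f" if "a \<le> s" "s \<le> t" "t \<le> b" for s t
    unfolding F_def by (rule comb3[OF fi that])
  have Wb: "0 \<le> W t - W s \<and> W t - W s \<le> (t - s) * K" if "a \<le> s" "s \<le> t" "t \<le> b" for s t
  proof -
    have "(t - s) * 0 \<le> integral {s..t} g \<and> integral {s..t} g \<le> (t - s) * K"
      by (rule integral_const_bounds) (use that integrable_mono_sub[OF gm, of s t] gb in auto)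
    thus ?thesis using Wd[OF that] by simp
  qed
  have Fb: "0 \<le> F t - F s" if "a \<le> s" "s \<le> t" "t \<le> b" for s t
  proof -
    have "0 \<le> integral {s..t} f"
      by (rule integral_nonneg) (use that integrable_on_subinterval[OF fi, of s t] fp in auto)
    thus ?thesis using Fd[OF that] by simp
  qed
  have Fa: "F a = 0" unfolding F_def by simp
  have Wa: "W a = 0" unfolding W_def by simp
  have Fbb: "F b = 1" unfolding F_def using F1 .
  have F01: "0 \<le> F x \<and> F x \<le> 1" if "x \<in> {a..b}" for x
    using Fb[of a x] Fb[of x b] that Fa Fbb by auto
  have W0: "0 \<le> W x \<and> W x \<le> (b - a) * K" if "x \<in> {a..b}" for x
  proof -
    have "W x \<le> (x - a) * K" using Wb[of a x] that Wa by auto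
    also have "\<dots> \<le> (b - a) * K" using that K0 by (intro mult_right_mono) auto
    finally show ?thesis using Wb[of a x] that Wa by auto
  qed
  have gmeas: "g \<in> borel_measurable (lebesgue_on {a..b})" by (rule mono_meas[OF gm])
  have Wmeas: "W \<in> borel_measurable (lebesgue_on {a..b})" by (rule cont_meas[OF Wc])
  have Fmeas: "F \<in> borel_measurable (lebesgue_on {a..b})" by (rule cont_meas[OF Fc])
  have i1: "(\<lambda>\<theta>. W \<theta> * f \<theta>) integrable_on {a..b}"
    by (rule bm_int_f[OF Wmeas _ fi fp, where B="(b - a) * K"]) (use W0 in auto)
  have i2: "(\<lambda>z. g z * (1 - F z)) integrable_on {a..b}"
  proof (rule bm_int[where B=K])
    show "(\<lambda>z. g z * (1 - F z)) \<in> borel_measurable (lebesgue_on {a..b})"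
      using gmeas Fmeas by measurable
    fix x assume x: "x \<in> {a..b}"
    have "g x * (1 - F x) \<le> K * 1" using gb[OF x] F01[OF x] by (intro mult_mono) auto
    moreover have "0 \<le> g x * (1 - F x)" using gb[OF x] F01[OF x] by auto
    ultimately show "\<bar>g x * (1 - F x)\<bar> \<le> K" by auto
  qed
  have i4: "(\<lambda>z. g z * (c - F z)) integrable_on {a..b}" if "0 \<le> c" "c \<le> 1" for c
  proof (rule bm_int[where B=K])
    show "(\<lambda>z. g z * (c - F z)) \<in> borel_measurable (lebesgue_on {a..b})"
      using gmeas Fmeas by measurable
    fix x assume x: "x \<in> {a..b}"
    have "\<bar>c - F x\<bar> \<le> 1" using F01[OF x] that by auto
    hence "\<bar>g x\<bar> * \<bar>c - F x\<bar> \<le> K * 1" using gb[OF x] by (intro mult_mono) auto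
    thus "\<bar>g x * (c - F x)\<bar> \<le> K" by (simp add: abs_mult)
  qed
  define D where "D t = integral {a..t} (\<lambda>\<theta>. W \<theta> * f \<theta>) - W t * (F t - 1)
      - integral {a..t} (\<lambda>z. g z * (1 - F z))" for t
  have "D b = D a"
  proof (rule tele[OF ab, where G="\<lambda>x. K * F x"])
    show "mono_on {a..b} (\<lambda>x. K * F x)"
      unfolding mono_on_def using Fb K0 by (auto intro: mult_left_mono)
    fix s t assume st: "a \<le> s" "s \<le> t" "t \<le> b"
    have sub: "{s..t} \<subseteq> {a..b}" using st by auto
    have fis: "f integrable_on {s..t}" by (rule integrable_on_subinterval[OF fi sub])
    have gis: "g integrable_on {s..t}" by (rule integrable_on_subinterval[OF gi sub])
    have i1s: "(\<lambda>\<theta>. W \<theta> * f \<theta>) integrable_on {s..t}" by (rule integrable_on_subinterval[OF i1 sub])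
    have i2s: "(\<lambda>z. g z * (1 - F z)) integrable_on {s..t}" by (rule integrable_on_subinterval[OF i2 sub])
    have Ft01: "0 \<le> F t" "F t \<le> 1" using F01[of t] st by auto
    have i4s: "(\<lambda>z. g z * (F t - F z)) integrable_on {s..t}"
      by (rule integrable_on_subinterval[OF i4[OF Ft01] sub])
    have i3s: "(\<lambda>\<theta>. (W \<theta> - W s) * f \<theta>) integrable_on {s..t}"
    proof -
      have "(\<lambda>\<theta>. W \<theta> * f \<theta> - W s * f \<theta>) integrable_on {s..t}"
        by (rule integrable_diff[OF i1s integrable_on_mult_right[OF fis]])
      thus ?thesis by (simp add: algebra_simps)
    qed
    have c1: "integral {a..t} (\<lambda>\<theta>. W \<theta> * f \<theta>) = integral {a..s} (\<lambda>\<theta>. W \<theta> * f \<theta>) + integral {s..t} (\<lambda>\<theta>. W \<theta> * f \<theta>)"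
      by (rule comb3[OF i1 st])
    have c2: "integral {a..t} (\<lambda>z. g z * (1 - F z)) = integral {a..s} (\<lambda>z. g z * (1 - F z)) + integral {s..t} (\<lambda>z. g z * (1 - F z))"
      by (rule comb3[OF i2 st])
    define X where "X = integral {s..t} (\<lambda>\<theta>. (W \<theta> - W s) * f \<theta>)"
    define Y where "Y = integral {s..t} (\<lambda>z. g z * (F t - F z))"
    have e1: "integral {s..t} (\<lambda>\<theta>. W \<theta> * f \<theta>) = X + W s * (F t - F s)"
    proof -
      have "X = integral {s..t} (\<lambda>\<theta>. W \<theta> * f \<theta> - W s * f \<theta>)"
        unfolding X_def by (simp add: algebra_simps)
      also have "\<dots> = integral {s..t} (\<lambda>\<theta>. W \<theta> * f \<theta>) - integral {s..t} (\<lambda>\<theta>. W s * f \<theta>)"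
        by (rule Henstock_Kurzweil_Integration.integral_diff[OF i1s integrable_on_mult_right[OF fis]])
      also have "integral {s..t} (\<lambda>\<theta>. W s * f \<theta>) = W s * integral {s..t} f"
        using integral_mult[OF fis, of "W s"] by simp
      finally show ?thesis using Fd[OF st] by simp
    qed
    have e2: "integral {s..t} (\<lambda>z. g z * (1 - F z)) = (1 - F t) * (W t - W s) + Y"
    proof -
      have "integral {s..t} (\<lambda>z. g z * (1 - F z)) = integral {s..t} (\<lambda>z. (1 - F t) * g z + g z * (F t - F z))"
        by (simp add: algebra_simps)
      also have "\<dots> = integral {s..t} (\<lambda>z. (1 - F t) * g z) + Y"
        unfolding Y_def by (rule integral_add[OF integrable_on_mult_right[OF gis] i4s])
      also have "integral {s..t} (\<lambda>z. (1 - F t) * g z) = (1 - F t) * integral {s..t} g"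
        using integral_mult[OF gis, of "1 - F t"] by simp
      finally show ?thesis using Wd[OF st] by simp
    qed
    have b1: "0 \<le> X \<and> X \<le> K * (t - s) * (F t - F s)"
    proof
      show "0 \<le> X" unfolding X_def
        by (rule integral_nonneg[OF i3s]) (use Wb fp st in \<open>auto intro!: mult_nonneg_nonneg\<close>)
      have "X \<le> integral {s..t} (\<lambda>\<theta>. (K * (t - s)) * f \<theta>)" unfolding X_def
      proof (rule integral_le[OF i3s integrable_on_mult_right[OF fis]])
        fix x assume x: "x \<in> {s..t}"
        have "W x - W s \<le> (x - s) * K" using Wb[of s x] st x by auto
        also have "\<dots> \<le> K * (t - s)" using x K0 by (simp add: mult.commute mult_left_mono)
        finally show "(W x - W s) * f x \<le> K * (t - s) * f x"
          using fp[of x] x st by (intro mult_right_mono) auto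
      qed
      also have "\<dots> = K * (t - s) * (F t - F s)"
        using integral_mult[OF fis, of "K * (t - s)"] Fd[OF st] by simp
      finally show "X \<le> K * (t - s) * (F t - F s)" .
    qed
    have b2: "0 \<le> Y \<and> Y \<le> K * (t - s) * (F t - F s)"
    proof -
      have "(t - s) * 0 \<le> Y \<and> Y \<le> (t - s) * (K * (F t - F s))" unfolding Y_def
      proof (rule integral_const_bounds[OF i4s st(2)])
        fix x assume x: "x \<in> {s..t}"
        have "0 \<le> F t - F x" "F t - F x \<le> F t - F s" using Fb[of x t] Fb[of s x] x st by auto
        thus "0 \<le> g x * (F t - F x) \<and> g x * (F t - F x) \<le> K * (F t - F s)"
          using gb[of x] x st by (auto intro: mult_mono)
      qed
      thus ?thesis by (simp add: algebra_simps)
    qed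
    have "D t - D s = X - Y"
      unfolding D_def using c1 c2 e1 e2 by (simp add: algebra_simps)
    moreover have "K * (t - s) * (F t - F s) = (t - s) * (K * F t - K * F s)"
      by (simp add: algebra_simps)
    ultimately show "\<bar>D t - D s\<bar> \<le> (t - s) * (K * F t - K * F s)"
      using b1 b2 by linarith
  qed
  hence "integral {a..b} (\<lambda>\<theta>. W \<theta> * f \<theta>) = integral {a..b} (\<lambda>z. g z * (1 - F z))"
    unfolding D_def using Fbb Wa Fa by simp
  thus "integral {a..b} (\<lambda>\<theta>. integral {a..\<theta>} g * f \<theta>) = integral {a..b} (\<lambda>z. g z * (1 - integral {a..z} f))"
    unfolding W_def F_def .
  show "(\<lambda>\<theta>. integral {a..\<theta>} g * f \<theta>) integrable_on {a..b}" using i1 unfolding W_def .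
  show "(\<lambda>z. g z * (1 - integral {a..z} f)) integrable_on {a..b}" using i2 unfolding F_def .
qed


lemma downclosed_borel:
  fixes B :: "real set"
  assumes "B \<subseteq> {0..}" "\<And>a a'. a \<in> B \<Longrightarrow> 0 \<le> a' \<Longrightarrow> a' \<le> a \<Longrightarrow> a' \<in> B"
  shows "B \<in> sets borel"
proof (cases "B = {}")
  case True thus ?thesis by simp
next
  case ne: False
  show ?thesis
  proof (cases "bdd_above B")
    case False
    have "B = {0..}"
    proof
      show "{0..} \<subseteq> B"
      proof
        fix x :: real assume "x \<in> {0..}"
        have "\<not> (\<forall>b\<in>B. b \<le> x)" using False by (auto simp: bdd_above_def)
        then obtain b where "b \<in> B" "x \<le> b" by (meson linorder_linear)
        thus "x \<in> B" using assms(2) \<open>x \<in> {0..}\<close> by auto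
      qed
    qed (use assms in auto)
    thus ?thesis by simp
  next
    case True
    define s where "s = Sup B"
    have "B = {0..<s} \<union> (B \<inter> {s})"
    proof
      show "B \<subseteq> {0..<s} \<union> (B \<inter> {s})"
        using assms(1) cSup_upper[OF _ True] unfolding s_def by force
      show "{0..<s} \<union> (B \<inter> {s}) \<subseteq> B"
      proof
        fix x assume x: "x \<in> {0..<s} \<union> (B \<inter> {s})"
        show "x \<in> B"
        proof (cases "x \<in> B \<inter> {s}")
          case False
          hence "0 \<le> x" "x < Sup B" using x s_def by auto
          then obtain b where "b \<in> B" "x < b" using less_cSupD[OF ne] by blast
          thus ?thesis using assms(2) \<open>0 \<le> x\<close> by auto
        qed auto
      qed
    qed
    moreover have "B \<inter> {s} \<in> sets borel"
      by (cases "s \<in> B") auto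
    ultimately show ?thesis by (metis sets.Un atLeastLessThan_borel)
  qed
qed

lemma Sup_unbdd_real:
  fixes X Y :: "real set"
  assumes "\<not> bdd_above X" "\<not> bdd_above Y"
  shows "Sup X = Sup Y"
proof -
  have "(\<lambda>z. \<forall>x\<in>X. x \<le> z) = (\<lambda>z. False)" using assms(1) unfolding bdd_above_def by (auto simp: fun_eq_iff)
  moreover have "(\<lambda>z. \<forall>x\<in>Y. x \<le> z) = (\<lambda>z. False)" using assms(2) unfolding bdd_above_def by (auto simp: fun_eq_iff)
  ultimately show ?thesis unfolding Sup_real_def by simp
qed

lemma util_meas: "(\<lambda>a. util v a \<theta>) \<in> borel_measurable borel"
proof -
  define S where "S a = (\<lambda>x'. v x' + \<theta> * x') ` {0..a}" for a
  define B where "B = {a. 0 \<le> a \<and> bdd_above (S a)}"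
  have Smono: "S a \<subseteq> S b" if "a \<le> b" for a b unfolding S_def using that by auto
  have Bb: "B \<in> sets borel"
  proof (rule downclosed_borel)
    show "B \<subseteq> {0..}" unfolding B_def by auto
    fix a a' assume "a \<in> B" "0 \<le> a'" "a' \<le> a"
    hence "bdd_above (S a)" unfolding B_def by simp
    hence "bdd_above (S a')" by (rule bdd_above_mono) (rule Smono[OF \<open>a' \<le> a\<close>])
    thus "a' \<in> B" unfolding B_def using \<open>0 \<le> a'\<close> by blast
  qed
  let ?C = "{{..<0}, B, {0..} - B}"
  show ?thesis unfolding util_def
  proof (rule borel_measurable_piecewise_mono[of ?C])
    show "countable ?C" by simp
    show "\<And>c. c \<in> ?C \<Longrightarrow> c \<in> sets borel" using Bb by auto
    show "\<Union> ?C = UNIV" unfolding B_def by auto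
    fix c assume c: "c \<in> ?C"
    show "mono_on c (\<lambda>a. Sup ((\<lambda>x'. v x' + \<theta> * x') ` {0..a}))"
    proof -
      { assume "c = {..<0}"
        hence ?thesis unfolding mono_on_def by auto }
      moreover
      { assume "c = B"
        hence ?thesis unfolding mono_on_def
        proof (intro allI impI, goal_cases)
          case (1 r s)
          have "S r \<noteq> {}" using 1 unfolding B_def S_def by auto
          thus ?case using cSup_subset_mono[of "S r" "S s"] Smono[of r s] 1
            unfolding B_def S_def by auto
        qed }
      moreover
      { assume "c = {0..} - B"
        hence ?thesis unfolding mono_on_def
        proof (intro allI impI, goal_cases)
          case (1 r s)
          have "\<not> bdd_above (S r)" "\<not> bdd_above (S s)" using 1 unfolding B_def by auto
          thus ?case using Sup_unbdd_real unfolding S_def by (metis order_refl)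
        qed }
      ultimately show ?thesis using c by blast
    qed
  qed
qed


locale mdl =
  fixes tlo thi xh :: real and v v' F f xs :: "real \<Rightarrow> real" and m :: real
  assumes tl: "tlo < thi" and xh: "0 < xh"
    and sc: "strictly_concave_on {0..xh} v"
    and vd: "\<And>x. x \<in> {0..xh} \<Longrightarrow> (v has_real_derivative v' x) (at x within {0..xh})"
    and fi: "f integrable_on {tlo..thi}"
    and Fd: "\<And>\<theta>. \<theta> \<in> {tlo..thi} \<Longrightarrow> F \<theta> = integral {tlo..\<theta>} f"
    and F1: "F thi = 1"
    and m: "0 < m" and fm: "\<And>\<theta>. \<theta> \<in> {tlo..thi} \<Longrightarrow> m \<le> f \<theta>"
    and phim: "strict_mono_on {tlo..thi} (\<lambda>\<theta>. \<theta> - (1 - F \<theta>) / f \<theta>)"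
    and xsd: "\<And>\<theta>. xs \<theta> = (THE x. x \<in> {xeff v xh tlo..xh} \<and>
          (\<forall>y\<in>{xeff v xh tlo..xh}.
             v y + y * (\<theta> - (1 - F \<theta>) / f \<theta>) \<le> v x + x * (\<theta> - (1 - F \<theta>) / f \<theta>)))"
begin

abbreviation "xe \<theta> \<equiv> xeff v xh \<theta>"
abbreviation "e \<equiv> xeff v xh tlo"
definition "phi \<theta> = \<theta> - (1 - F \<theta>) / f \<theta>"

lemma vc: "continuous_on {0..xh} v"
  using vd by (meson continuous_on_eq_continuous_within DERIV_continuous)

lemma xe_amax: "amax v 0 xh \<theta> (xe \<theta>)"
proof -
  obtain x where x: "amax v 0 xh \<theta> x" using amax_exists[OF vc, of 0 xh] xh by auto
  have u: "\<And>y. amax v 0 xh \<theta> y \<Longrightarrow> y = x" using amax_unique[OF sc _ _ _ x] by auto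
  have "xe \<theta> = (THE x. amax v 0 xh \<theta> x)" unfolding xeff_def amax_def ..
  also have "\<dots> = x" using x u by (rule the_equality)
  finally show ?thesis using x by simp
qed

lemma xe_range: "xe \<theta> \<in> {0..xh}" using xe_amax by (simp add: amax_def)

lemma xe_mono: "\<theta> \<le> \<theta>' \<Longrightarrow> xe \<theta> \<le> xe \<theta>'"
  using amax_mono[OF sc _ _ xe_amax xe_amax] by auto

lemma e_range: "0 \<le> e" "e \<le> xh" using xe_range by auto

lemma xs_amax: "amax v e xh (phi \<theta>) (xs \<theta>)"
proof -
  obtain x where x: "amax v e xh (phi \<theta>) x" using amax_exists[OF vc, of e xh] e_range by auto
  have u: "\<And>y. amax v e xh (phi \<theta>) y \<Longrightarrow> y = x" using amax_unique[OF sc _ _ _ x] e_range by auto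
  have "xs \<theta> = (THE x. x \<in> {e..xh} \<and> (\<forall>y\<in>{e..xh}. v y + y * phi \<theta> \<le> v x + x * phi \<theta>))"
    unfolding phi_def by (rule xsd)
  also have "\<dots> = (THE x. amax v e xh (phi \<theta>) x)" unfolding amax_def
    by (simp only: mult.commute)
  also have "\<dots> = x" using x u by (rule the_equality)
  finally show ?thesis using x by simp
qed

lemma xs_range: "xs \<theta> \<in> {e..xh}" using xs_amax by (simp add: amax_def)

lemma fpos: "\<theta> \<in> {tlo..thi} \<Longrightarrow> 0 < f \<theta>" using fm m by force

lemma F_diff: "tlo \<le> s \<Longrightarrow> s \<le> t \<Longrightarrow> t \<le> thi \<Longrightarrow> F t = F s + integral {s..t} f"
proof -
  assume st: "tlo \<le> s" "s \<le> t" "t \<le> thi"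
  show ?thesis using Fd[of t] Fd[of s] comb3[OF fi st] st by simp
qed

lemma F_mono: "tlo \<le> s \<Longrightarrow> s \<le> t \<Longrightarrow> t \<le> thi \<Longrightarrow> F s \<le> F t"
proof -
  assume st: "tlo \<le> s" "s \<le> t" "t \<le> thi"
  have "0 \<le> integral {s..t} f"
    by (rule integral_nonneg) (use st integrable_on_subinterval[OF fi, of s t] fpos in \<open>auto intro: less_imp_le\<close>)
  thus ?thesis using F_diff[OF st] by simp
qed

lemma F_range: "\<theta> \<in> {tlo..thi} \<Longrightarrow> 0 \<le> F \<theta> \<and> F \<theta> \<le> 1"
  using F_mono[of tlo \<theta>] F_mono[of \<theta> thi] F1 Fd[of tlo] tl by auto

lemma phi_le: "\<theta> \<in> {tlo..thi} \<Longrightarrow> phi \<theta> \<le> \<theta>"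
proof -
  assume th: "\<theta> \<in> {tlo..thi}"
  have "0 \<le> (1 - F \<theta>) / f \<theta>" using F_range[OF th] fpos[OF th] by simp
  thus ?thesis unfolding phi_def by simp
qed

lemma xs_mono: "\<theta> \<in> {tlo..thi} \<Longrightarrow> \<theta>' \<in> {tlo..thi} \<Longrightarrow> \<theta> \<le> \<theta>' \<Longrightarrow> xs \<theta> \<le> xs \<theta>'"
proof -
  assume a: "\<theta> \<in> {tlo..thi}" "\<theta>' \<in> {tlo..thi}" "\<theta> \<le> \<theta>'"
  have "phi \<theta> \<le> phi \<theta>'" using phim a unfolding phi_def strict_mono_on_def
    by (cases "\<theta> = \<theta>'") (auto intro: less_imp_le)
  thus ?thesis using amax_mono[OF sc _ _ xs_amax xs_amax] e_range by auto
qed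

lemma xs_mono_on: "mono_on {tlo..thi} xs" unfolding mono_on_def using xs_mono by auto

lemma xs_le_xe: "\<theta> \<in> {tlo..thi} \<Longrightarrow> xs \<theta> \<le> xe \<theta>"
proof (rule ccontr)
  assume th: "\<theta> \<in> {tlo..thi}" and "\<not> xs \<theta> \<le> xe \<theta>"
  hence gt: "xe \<theta> < xs \<theta>" by simp
  have "e \<le> xe \<theta>" using xe_mono th by auto
  hence gte: "e < xs \<theta>" using gt by simp
  define y where "y = max (xe \<theta>) e"
  have y: "y \<in> {e..xh}" "y < xs \<theta>" "xe \<theta> \<le> y" unfolding y_def using gt gte xe_range e_range by auto
  have "v (xs \<theta>) + \<theta> * xs \<theta> < v y + \<theta> * y"
    by (rule amax_between[OF sc xe_amax]) (use y xs_range[of \<theta>] xe_range[of \<theta>] e_range in auto)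
  moreover have "(\<theta> - phi \<theta>) * y \<le> (\<theta> - phi \<theta>) * xs \<theta>"
    using phi_le[OF th] y by (intro mult_left_mono) auto
  ultimately have "v (xs \<theta>) + phi \<theta> * xs \<theta> < v y + phi \<theta> * y" by (simp add: algebra_simps)
  moreover have "v y + phi \<theta> * y \<le> v (xs \<theta>) + phi \<theta> * xs \<theta>"
    using xs_amax y(1) unfolding amax_def by blast
  ultimately show False by simp
qed

lemma claim2: "\<theta> \<in> {tlo..thi} \<Longrightarrow> y \<in> {0..xs \<theta>} \<Longrightarrow> y \<noteq> xs \<theta> \<Longrightarrow>
   v y + \<theta> * y < v (xs \<theta>) + \<theta> * xs \<theta>"
proof -
  assume a: "\<theta> \<in> {tlo..thi}" "y \<in> {0..xs \<theta>}" "y \<noteq> xs \<theta>"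
  show ?thesis
    by (rule amax_between[OF sc xe_amax]) (use a xs_le_xe[OF a(1)] xs_range[of \<theta>] e_range in auto)
qed

lemma util_max:
  assumes x: "x \<in> {0..xh}"
  shows "util v x \<theta> = v (min x (xe \<theta>)) + \<theta> * min x (xe \<theta>)"
    "\<And>y. y \<in> {0..x} \<Longrightarrow> v y + \<theta> * y \<le> v (min x (xe \<theta>)) + \<theta> * min x (xe \<theta>)"
proof -
  show le: "v y + \<theta> * y \<le> v (min x (xe \<theta>)) + \<theta> * min x (xe \<theta>)" if y: "y \<in> {0..x}" for y
  proof (cases "x \<le> xe \<theta>")
    case True
    show ?thesis
    proof (cases "y = x")
      case False
      have "v y + \<theta> * y < v x + \<theta> * x"
        by (rule amax_between[OF sc xe_amax]) (use True y x False in auto)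
      thus ?thesis using True by simp
    qed (use True in simp)
  next
    case False
    thus ?thesis using xe_amax y x unfolding amax_def by auto
  qed
  have "min x (xe \<theta>) \<in> {0..x}" using x xe_range by auto
  thus "util v x \<theta> = v (min x (xe \<theta>)) + \<theta> * min x (xe \<theta>)"
    unfolding util_def by (intro cSup_eq_maximum) (use le in auto)
qed

lemma util_sub:
  assumes x: "x \<in> {0..xh}"
  shows "util v x \<theta> \<ge> util v x \<theta>' + (\<theta> - \<theta>') * min x (xe \<theta>')"
proof -
  have "min x (xe \<theta>') \<in> {0..x}" using x xe_range by auto
  from util_max(2)[OF x, of _ \<theta>, OF this]
  show ?thesis unfolding util_max(1)[OF x] by (simp add: algebra_simps)
qed

lemma util_bound:
  obtains B where "\<And>x. x \<in> {0..xh} \<Longrightarrow> \<bar>util v x \<theta>\<bar> \<le> B"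
proof -
  have "bounded (v ` {0..xh})"
    using compact_imp_bounded[OF compact_continuous_image[OF vc compact_Icc]] .
  then obtain Bv where Bv: "\<And>x. x \<in> {0..xh} \<Longrightarrow> \<bar>v x\<bar> \<le> Bv"
    unfolding bounded_iff by (metis imageI real_norm_def)
  have "\<bar>util v x \<theta>\<bar> \<le> Bv + \<bar>\<theta>\<bar> * xh" if x: "x \<in> {0..xh}" for x
  proof -
    have r: "min x (xe \<theta>) \<in> {0..xh}" using x xe_range by auto
    have "\<bar>\<theta> * min x (xe \<theta>)\<bar> \<le> \<bar>\<theta>\<bar> * xh" using r by (auto simp: abs_mult intro: mult_left_mono)
    thus ?thesis unfolding util_max(1)[OF x] using Bv[OF r] by linarith
  qed
  thus ?thesis using that by blast
qed

end

context mdl begin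

lemma v_bound: obtains Bv where "\<And>x. x \<in> {0..xh} \<Longrightarrow> \<bar>v x\<bar> \<le> Bv"
proof -
  have "bounded (v ` {0..xh})"
    using compact_imp_bounded[OF compact_continuous_image[OF vc compact_Icc]] .
  then obtain Bv where Bv: "\<And>x. x \<in> {0..xh} \<Longrightarrow> \<bar>v x\<bar> \<le> Bv"
    unfolding bounded_iff by (metis imageI real_norm_def)
  thus ?thesis using that by blast
qed

lemma vcomp_meas:
  fixes g :: "real \<Rightarrow> real"
  assumes "g \<in> borel_measurable (lebesgue_on S)" "\<And>x. x \<in> S \<Longrightarrow> g x \<in> {0..xh}"
  shows "(\<lambda>x. v (g x)) \<in> borel_measurable (lebesgue_on S)"
proof -
  define cl where "cl y = max 0 (min y xh)" for y
  have c1: "continuous_on UNIV cl" unfolding cl_def by (intro continuous_intros)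
  have img: "cl ` UNIV \<subseteq> {0..xh}" unfolding cl_def using xh by auto
  have "continuous_on UNIV (v \<circ> cl)"
    by (rule continuous_on_compose[OF c1 continuous_on_subset[OF vc img]])
  hence "(v \<circ> cl) \<in> borel_measurable borel" by (rule borel_measurable_continuous_onI)
  hence m: "(\<lambda>x. (v \<circ> cl) (g x)) \<in> borel_measurable (lebesgue_on S)"
    by (rule measurable_compose[OF assms(1)])
  have eq: "\<And>x. x \<in> space (lebesgue_on S) \<Longrightarrow> v (g x) = (v \<circ> cl) (g x)"
    unfolding cl_def using assms(2) by (simp add: space_restrict_space)
  show ?thesis using measurable_cong[where M="lebesgue_on S" and f="\<lambda>x. v (g x)" and g="\<lambda>x. (v \<circ> cl) (g x)", OF eq] m
    by simp
qed

lemma EU_ret: "EU v (return borel x) \<theta> = util v x \<theta>"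
  unfolding EU_def by (rule integral_return) (auto simp: util_meas)

definition "Ixs \<theta> = integral {tlo..\<theta>} xs"
definition "pp \<theta> = util v (xs \<theta>) \<theta> - Ixs \<theta>"

lemma xs_int: "tlo \<le> s \<Longrightarrow> t \<le> thi \<Longrightarrow> xs integrable_on {s..t}"
  using integrable_mono_sub[OF xs_mono_on] by auto

lemma xs01: "xs \<theta> \<in> {0..xh}" using xs_range[of \<theta>] e_range by auto

lemma util_xs: "\<theta> \<in> {tlo..thi} \<Longrightarrow> util v (xs \<theta>) \<theta> = v (xs \<theta>) + \<theta> * xs \<theta>"
proof -
  assume th: "\<theta> \<in> {tlo..thi}"
  have "min (xs \<theta>) (xe \<theta>) = xs \<theta>" using xs_le_xe[OF th] by simp
  thus ?thesis using util_max(1)[OF xs01, of \<theta> \<theta>] by simp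
qed

lemma IC_p:
  assumes th: "\<theta> \<in> {tlo..thi}" and th': "\<theta>' \<in> {tlo..thi}"
  shows "util v (xs \<theta>') \<theta> - pp \<theta>' \<le> util v (xs \<theta>) \<theta> - pp \<theta>"
proof -
  define x where "x = xs \<theta>'"
  have x: "x \<in> {0..xh}" unfolding x_def by (rule xs01)
  define k where "k z = util v x z" for z
  define g where "g z = min x (xe z)" for z
  have gm: "mono_on {a..b} g" for a b unfolding mono_on_def g_def
    by (meson min.mono order_refl xe_mono)
  have hi: "(g has_integral (k b - k a)) {a..b}" if "a \<le> b" for a b
  proof (rule subgrad_integral[OF that gm])
    fix s t
    show "k s + (t - s) * g s \<le> k t" unfolding k_def g_def by (rule util_sub[OF x])
  qed
  have key: "k \<theta> - k \<theta>' \<le> Ixs \<theta> - Ixs \<theta>'"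
  proof (cases "\<theta>' \<le> \<theta>")
    case True
    have "k \<theta> - k \<theta>' = integral {\<theta>'..\<theta>} g" by (rule integral_unique[OF hi[OF True], symmetric])
    also have "\<dots> \<le> integral {\<theta>'..\<theta>} xs" 
    proof (rule integral_le)
      show "g integrable_on {\<theta>'..\<theta>}" using hi[OF True] by blast
      show "xs integrable_on {\<theta>'..\<theta>}" using xs_int th th' by auto
      fix z assume z: "z \<in> {\<theta>'..\<theta>}"
      have "x \<le> xs z" unfolding x_def using xs_mono th th' z by auto
      thus "g z \<le> xs z" unfolding g_def by simp
    qed
    also have "\<dots> = Ixs \<theta> - Ixs \<theta>'"
    proof -
      have "integral {tlo..\<theta>} xs = integral {tlo..\<theta>'} xs + integral {\<theta>'..\<theta>} xs"
        by (rule comb3[OF xs_int[OF order_refl order_refl]]) (use th th' True in auto)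
      thus ?thesis unfolding Ixs_def by linarith
    qed
    finally show ?thesis .
  next
    case False
    hence le: "\<theta> \<le> \<theta>'" by simp
    have "Ixs \<theta>' - Ixs \<theta> = integral {\<theta>..\<theta>'} xs"
    proof -
      have "integral {tlo..\<theta>'} xs = integral {tlo..\<theta>} xs + integral {\<theta>..\<theta>'} xs"
        by (rule comb3[OF xs_int[OF order_refl order_refl]]) (use th th' le in auto)
      thus ?thesis unfolding Ixs_def by linarith
    qed
    also have "\<dots> \<le> integral {\<theta>..\<theta>'} g"
    proof (rule integral_le)
      show "g integrable_on {\<theta>..\<theta>'}" using hi[OF le] by blast
      show "xs integrable_on {\<theta>..\<theta>'}" using xs_int th th' by auto
      fix z assume z: "z \<in> {\<theta>..\<theta>'}"
      have "xs z \<le> x" unfolding x_def using xs_mono th th' z by auto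
      moreover have "xs z \<le> xe z" using xs_le_xe th th' z by auto
      ultimately show "xs z \<le> g z" unfolding g_def by simp
    qed
    also have "\<dots> = k \<theta>' - k \<theta>" by (rule integral_unique[OF hi[OF le]])
    finally show ?thesis by linarith
  qed
  thus ?thesis unfolding pp_def k_def x_def by linarith
qed

lemma Ixs_nonneg: "\<theta> \<in> {tlo..thi} \<Longrightarrow> 0 \<le> Ixs \<theta>"
  unfolding Ixs_def by (rule integral_nonneg) (use xs_int[of tlo \<theta>] xs01 in auto)

lemma feas_p: "feasible tlo thi xh v (\<lambda>\<theta>. return borel (xs \<theta>)) pp"
  unfolding feasible_def
proof (intro conjI ballI)
  fix \<theta> assume "\<theta> \<in> {tlo..thi}"
  show "prob_space (return borel (xs \<theta>))" by (rule prob_space_return) simp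
  show "sets (return borel (xs \<theta>)) = sets borel" by simp
  show "AE a in return borel (xs \<theta>). a \<in> {0..xh}"
    by (subst AE_return) (use xs01 in auto)
next
  fix \<theta> \<theta>' assume "\<theta> \<in> {tlo..thi}" "\<theta>' \<in> {tlo..thi}"
  thus "EU v (return borel (xs \<theta>')) \<theta> - pp \<theta>' \<le> EU v (return borel (xs \<theta>)) \<theta> - pp \<theta>"
    unfolding EU_ret by (rule IC_p)
next
  fix \<theta> assume "\<theta> \<in> {tlo..thi}"
  thus "0 \<le> EU v (return borel (xs \<theta>)) \<theta> - pp \<theta>"
    unfolding EU_ret pp_def using Ixs_nonneg by simp
next
  show "AE a in return borel (xs tlo). e \<le> a"
    by (subst AE_return) (use xs_range in auto)
qed


end

context mdl begin

lemma vcomp_meas_gen: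
  fixes g :: "'a \<Rightarrow> real"
  assumes "g \<in> borel_measurable M" "\<And>x. x \<in> space M \<Longrightarrow> g x \<in> {0..xh}"
  shows "(\<lambda>x. v (g x)) \<in> borel_measurable M"
proof -
  define cl where "cl y = max 0 (min y xh)" for y
  have c1: "continuous_on UNIV cl" unfolding cl_def by (intro continuous_intros)
  have img: "cl ` UNIV \<subseteq> {0..xh}" unfolding cl_def using xh by auto
  have "continuous_on UNIV (v \<circ> cl)"
    by (rule continuous_on_compose[OF c1 continuous_on_subset[OF vc img]])
  hence "(v \<circ> cl) \<in> borel_measurable borel" by (rule borel_measurable_continuous_onI)
  hence m: "(\<lambda>x. (v \<circ> cl) (g x)) \<in> borel_measurable M"
    by (rule measurable_compose[OF assms(1)])
  have eq: "\<And>x. x \<in> space M \<Longrightarrow> v (g x) = (v \<circ> cl) (g x)"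
    unfolding cl_def using assms(2) by simp
  show ?thesis using measurable_cong[where M=M and f="\<lambda>x. v (g x)" and g="\<lambda>x. (v \<circ> cl) (g x)", OF eq] m
    by simp
qed

lemma tangent:
  assumes mu: "\<mu> \<in> {0<..<xh}" and y: "y \<in> {0..xh}"
  shows "v y \<le> v \<mu> + v' \<mu> * (y - \<mu>)"
proof -
  have cv: "convex_on {0..xh} (\<lambda>x. - v x)"
  proof (rule convex_onI)
    fix t x y :: real assume t: "0 < t" "t < 1" and x: "x \<in> {0..xh}" and y: "y \<in> {0..xh}"
    show "- v ((1 - t) *\<^sub>R x + t *\<^sub>R y) \<le> (1 - t) * - v x + t * - v y"
    proof (cases "x = y")
      case True thus ?thesis by (simp add: algebra_simps)
    next
      case False
      have H: "\<And>s. 0 < s \<Longrightarrow> s < 1 \<Longrightarrow> s * v x + (1 - s) * v y < v (s * x + (1 - s) * y)"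
        using sc x y False unfolding strictly_concave_on_def by blast
      have "(1 - t) * v x + (1 - (1 - t)) * v y < v ((1 - t) * x + (1 - (1 - t)) * y)"
        by (rule H) (use t in auto)
      thus ?thesis by (simp add: algebra_simps)
    qed
  qed (simp add: convex_real_interval)
  have d: "((\<lambda>x. - v x) has_field_derivative - v' \<mu>) (at \<mu> within {0..xh})"
    using vd[of \<mu>] mu by (auto intro!: derivative_eq_intros)
  have "- v y - - v \<mu> \<ge> - v' \<mu> * (y - \<mu>)"
    by (rule convex_on_imp_above_tangent[OF cv _ _ y d]) (use mu in auto)
  thus ?thesis by (simp add: algebra_simps)
qed

lemma jensen_v:
  fixes c :: "'a \<Rightarrow> real"
  assumes ps: "prob_space N" and cm: "c \<in> borel_measurable N" and cr: "\<And>a. a \<in> space N \<Longrightarrow> c a \<in> {0..xh}"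
  shows "(\<integral>a. v (c a) \<partial>N) \<le> v (\<integral>a. c a \<partial>N)"
proof -
  interpret prob_space N by (rule ps)
  obtain Bv where Bv: "\<And>x. x \<in> {0..xh} \<Longrightarrow> \<bar>v x\<bar> \<le> Bv" using v_bound by blast
  have ci: "integrable N c"
    by (rule integrable_const_bound[where B=xh]) (use cm cr in auto)
  have vm: "(\<lambda>a. v (c a)) \<in> borel_measurable N" by (rule vcomp_meas_gen[OF cm cr])
  have vi: "integrable N (\<lambda>a. v (c a))"
    by (rule integrable_const_bound[where B=Bv]) (use vm cr Bv in auto)
  define \<mu> where "\<mu> = (\<integral>a. c a \<partial>N)"
  have mu0: "0 \<le> \<mu>" unfolding \<mu>_def by (rule integral_ge_const[OF ci]) (use cr in auto)
  have mu1: "\<mu> \<le> xh" unfolding \<mu>_def by (rule integral_le_const[OF ci]) (use cr in auto)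
  show ?thesis
  proof (cases "\<mu> = 0 \<or> \<mu> = xh")
    case True
    hence "AE a in N. c a = \<mu>"
    proof
      assume m0: "\<mu> = 0"
      have "AE a in N. c a = 0"
        using integral_nonneg_eq_0_iff_AE[OF ci] m0 cr unfolding \<mu>_def by auto
      thus ?thesis using m0 by simp
    next
      assume m0: "\<mu> = xh"
      have i2: "integrable N (\<lambda>a. xh - c a)" using ci by simp
      have "(\<integral>a. xh - c a \<partial>N) = xh - \<mu>" unfolding \<mu>_def using ci prob_space by simp
      hence "AE a in N. xh - c a = 0"
        using integral_nonneg_eq_0_iff_AE[OF i2] m0 cr by auto
      thus ?thesis using m0 by auto
    qed
    hence "(\<integral>a. v (c a) \<partial>N) = (\<integral>a. v \<mu> \<partial>N)"
      by (intro integral_cong_AE) (use vm in auto)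
    also have "\<dots> = v \<mu>" using prob_space by simp
    finally show ?thesis unfolding \<mu>_def by simp
  next
    case False
    hence mu: "\<mu> \<in> {0<..<xh}" using mu0 mu1 by auto
    have "(\<integral>a. v (c a) \<partial>N) \<le> (\<integral>a. v \<mu> + v' \<mu> * (c a - \<mu>) \<partial>N)"
      by (rule integral_mono[OF vi]) (use ci tangent[OF mu] cr in auto)
    also have "\<dots> = v \<mu> + v' \<mu> * (\<mu> - \<mu>)"
      using ci prob_space unfolding \<mu>_def by simp
    finally show ?thesis unfolding \<mu>_def by simp
  qed
qed


definition "Fi z = integral {tlo..z} f"
definition "R \<theta> = (v (xs \<theta>) + xs \<theta> * phi \<theta>) * f \<theta>"

lemma Fi_F: "\<theta> \<in> {tlo..thi} \<Longrightarrow> Fi \<theta> = F \<theta>" unfolding Fi_def using Fd by simp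

lemma fint1: "integral {tlo..thi} f = 1" using Fd[of thi] F1 tl by simp

lemma fnn: "\<theta> \<in> {tlo..thi} \<Longrightarrow> 0 \<le> f \<theta>" using fpos by (simp add: less_imp_le)

lemma th_bound: "\<theta> \<in> {tlo..thi} \<Longrightarrow> \<bar>\<theta>\<bar> \<le> \<bar>tlo\<bar> + \<bar>thi\<bar>" by auto

lemma surplus_int:
  fixes g :: "real \<Rightarrow> real"
  assumes gm: "g \<in> borel_measurable (lebesgue_on {tlo..thi})" and gr: "\<And>\<theta>. \<theta> \<in> {tlo..thi} \<Longrightarrow> g \<theta> \<in> {0..xh}"
  shows "(\<lambda>\<theta>. (v (g \<theta>) + \<theta> * g \<theta>) * f \<theta>) integrable_on {tlo..thi}"
proof -
  obtain Bv where Bv: "\<And>x. x \<in> {0..xh} \<Longrightarrow> \<bar>v x\<bar> \<le> Bv" using v_bound by blast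
  have vm: "(\<lambda>\<theta>. v (g \<theta>)) \<in> borel_measurable (lebesgue_on {tlo..thi})"
    by (rule vcomp_meas[OF gm gr])
  have hm: "(\<lambda>\<theta>. v (g \<theta>) + \<theta> * g \<theta>) \<in> borel_measurable (lebesgue_on {tlo..thi})"
  proof -
    have idm: "(\<lambda>\<theta>::real. \<theta>) \<in> borel_measurable (lebesgue_on {tlo..thi})"
      by (rule cont_meas) (intro continuous_intros)
    show ?thesis by (intro borel_measurable_add borel_measurable_times vm gm idm)
  qed
  show ?thesis
  proof (rule bm_int_f[OF hm _ fi fnn, where B="Bv + (\<bar>tlo\<bar> + \<bar>thi\<bar>) * xh"])
    fix \<theta> assume th: "\<theta> \<in> {tlo..thi}"
    have "\<bar>\<theta> * g \<theta>\<bar> \<le> (\<bar>tlo\<bar> + \<bar>thi\<bar>) * xh"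
      unfolding abs_mult using th_bound[OF th] gr[OF th] by (intro mult_mono) auto
    thus "\<bar>v (g \<theta>) + \<theta> * g \<theta>\<bar> \<le> Bv + (\<bar>tlo\<bar> + \<bar>thi\<bar>) * xh" using Bv[OF gr[OF th]] by linarith
  qed auto
qed

lemma phi_eq:
  assumes th: "\<theta> \<in> {tlo..thi}"
  shows "(v y + y * phi \<theta>) * f \<theta> = (v y + \<theta> * y) * f \<theta> - y * (1 - Fi \<theta>)"
proof -
  have "f \<theta> \<noteq> 0" using fpos[OF th] by simp
  thus ?thesis unfolding phi_def Fi_F[OF th] by (simp add: field_simps)
qed

lemma rev_p:
  shows "(\<lambda>\<theta>. pp \<theta> * f \<theta>) integrable_on {tlo..thi}"
    "R integrable_on {tlo..thi}"
    "revenue tlo thi f pp = integral {tlo..thi} R"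
proof -
  have tle: "tlo \<le> thi" using tl by simp
  have xsb: "\<And>x. x \<in> {tlo..thi} \<Longrightarrow> 0 \<le> xs x \<and> xs x \<le> xh" using xs01 by auto
  note ib = ibp[OF tle xs_mono_on xsb fi fnn fint1]
  define A where "A \<theta> = (v (xs \<theta>) + \<theta> * xs \<theta>) * f \<theta>" for \<theta>
  have Ai: "A integrable_on {tlo..thi}" unfolding A_def
    by (rule surplus_int[OF mono_meas[OF xs_mono_on]]) (use xs01 in auto)
  have ppeq: "pp \<theta> * f \<theta> = A \<theta> - integral {tlo..\<theta>} xs * f \<theta>" if "\<theta> \<in> {tlo..thi}" for \<theta>
    unfolding pp_def A_def Ixs_def util_xs[OF that] by (simp add: algebra_simps)
  have Req: "R \<theta> = A \<theta> - xs \<theta> * (1 - integral {tlo..\<theta>} f)" if "\<theta> \<in> {tlo..thi}" for \<theta>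
    unfolding R_def A_def phi_eq[OF that] Fi_def ..
  have i1: "(\<lambda>\<theta>. A \<theta> - integral {tlo..\<theta>} xs * f \<theta>) integrable_on {tlo..thi}"
    by (rule integrable_diff[OF Ai ib(1)])
  have i2: "(\<lambda>\<theta>. A \<theta> - xs \<theta> * (1 - integral {tlo..\<theta>} f)) integrable_on {tlo..thi}"
    by (rule integrable_diff[OF Ai ib(2)])
  show "(\<lambda>\<theta>. pp \<theta> * f \<theta>) integrable_on {tlo..thi}" using integrable_eq[OF i1] ppeq by metis
  show "R integrable_on {tlo..thi}" using integrable_eq[OF i2] Req by metis
  have "revenue tlo thi f pp = integral {tlo..thi} (\<lambda>\<theta>. A \<theta> - integral {tlo..\<theta>} xs * f \<theta>)"
    unfolding revenue_def by (rule integral_cong) (rule ppeq)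
  also have "\<dots> = integral {tlo..thi} A - integral {tlo..thi} (\<lambda>\<theta>. integral {tlo..\<theta>} xs * f \<theta>)"
    by (rule Henstock_Kurzweil_Integration.integral_diff[OF Ai ib(1)])
  also have "\<dots> = integral {tlo..thi} A - integral {tlo..thi} (\<lambda>\<theta>. xs \<theta> * (1 - integral {tlo..\<theta>} f))"
    using ib(3) by simp
  also have "\<dots> = integral {tlo..thi} (\<lambda>\<theta>. A \<theta> - xs \<theta> * (1 - integral {tlo..\<theta>} f))"
    by (rule Henstock_Kurzweil_Integration.integral_diff[OF Ai ib(2), symmetric])
  also have "\<dots> = integral {tlo..thi} R"
    by (rule integral_cong) (rule Req[symmetric])
  finally show "revenue tlo thi f pp = integral {tlo..thi} R" .
qed


lemma opt:
  assumes feas: "feasible tlo thi xh v X q" and qi: "(\<lambda>\<theta>. q \<theta> * f \<theta>) integrable_on {tlo..thi}"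
  shows "revenue tlo thi f q \<le> integral {tlo..thi} R"
proof -
  have tle: "tlo \<le> thi" using tl by simp
  have ps: "\<And>\<theta>. \<theta> \<in> {tlo..thi} \<Longrightarrow> prob_space (X \<theta>)"
    and st: "\<And>\<theta>. \<theta> \<in> {tlo..thi} \<Longrightarrow> sets (X \<theta>) = sets borel"
    and ae: "\<And>\<theta>. \<theta> \<in> {tlo..thi} \<Longrightarrow> AE a in X \<theta>. a \<in> {0..xh}"
    and ic: "\<And>\<theta> \<theta>'. \<theta> \<in> {tlo..thi} \<Longrightarrow> \<theta>' \<in> {tlo..thi} \<Longrightarrow> EU v (X \<theta>') \<theta> - q \<theta>' \<le> EU v (X \<theta>) \<theta> - q \<theta>"
    and ir: "\<And>\<theta>. \<theta> \<in> {tlo..thi} \<Longrightarrow> 0 \<le> EU v (X \<theta>) \<theta> - q \<theta>"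
    and ae0: "AE a in X tlo. e \<le> a"
    using feas unfolding feasible_def by auto
  define cl where "cl t a = max 0 (min a (xe t))" for t a
  define cb where "cb t = (\<integral>a. cl t a \<partial>X t)" for t
  define U where "U t = EU v (X t) t - q t" for t
  have meq: "\<theta> \<in> {tlo..thi} \<Longrightarrow> borel_measurable (X \<theta>) = borel_measurable borel" for \<theta>
    by (rule measurable_cong_sets) (simp_all add: st)
  have um: "\<theta> \<in> {tlo..thi} \<Longrightarrow> (\<lambda>a. util v a t) \<in> borel_measurable (X \<theta>)" for \<theta> t
    using util_meas meq by blast
  have clb: "cl t \<in> borel_measurable borel" for t
    unfolding cl_def by (intro borel_measurable_continuous_onI continuous_intros)
  have clm: "\<theta> \<in> {tlo..thi} \<Longrightarrow> cl t \<in> borel_measurable (X \<theta>)" for \<theta> t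
    using clb meq by blast
  have clr: "cl t a \<in> {0..xh}" for t a unfolding cl_def using xe_range[of t] xh by auto
  have cl_eq: "a \<in> {0..xh} \<Longrightarrow> cl t a = min a (xe t)" for t a unfolding cl_def using xe_range[of t] by auto
  have ui: "\<theta> \<in> {tlo..thi} \<Longrightarrow> integrable (X \<theta>) (\<lambda>a. util v a t)" for \<theta> t
  proof -
    assume th: "\<theta> \<in> {tlo..thi}"
    interpret prob_space "X \<theta>" by (rule ps[OF th])
    obtain B where B: "\<And>x. x \<in> {0..xh} \<Longrightarrow> \<bar>util v x t\<bar> \<le> B" using util_bound by blast
    show ?thesis
    proof (rule integrable_const_bound[where B=B])
      show "AE a in X \<theta>. norm (util v a t) \<le> B"
        using ae[OF th] by eventually_elim (use B in auto)
    qed (rule um[OF th])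
  qed
  have ci: "\<theta> \<in> {tlo..thi} \<Longrightarrow> integrable (X \<theta>) (cl t)" for \<theta> t
  proof -
    assume th: "\<theta> \<in> {tlo..thi}"
    interpret prob_space "X \<theta>" by (rule ps[OF th])
    show ?thesis by (rule integrable_const_bound[where B=xh]) (use clr clm[OF th] in auto)
  qed
  have sub: "EU v (X \<theta>') \<theta> \<ge> EU v (X \<theta>') \<theta>' + (\<theta> - \<theta>') * cb \<theta>'"
    if th: "\<theta> \<in> {tlo..thi}" and th': "\<theta>' \<in> {tlo..thi}" for \<theta> \<theta>'
  proof -
    have "EU v (X \<theta>') \<theta>' + (\<theta> - \<theta>') * cb \<theta>' = (\<integral>a. util v a \<theta>' + (\<theta> - \<theta>') * cl \<theta>' a \<partial>X \<theta>')"
      unfolding EU_def cb_def using ui[OF th'] ci[OF th'] by simp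
    also have "\<dots> \<le> (\<integral>a. util v a \<theta> \<partial>X \<theta>')"
    proof (rule integral_mono_AE)
      show "integrable (X \<theta>') (\<lambda>a. util v a \<theta>' + (\<theta> - \<theta>') * cl \<theta>' a)"
        using ui[OF th'] ci[OF th'] by simp
      show "integrable (X \<theta>') (\<lambda>a. util v a \<theta>)" by (rule ui[OF th'])
      show "AE a in X \<theta>'. util v a \<theta>' + (\<theta> - \<theta>') * cl \<theta>' a \<le> util v a \<theta>"
        using ae[OF th'] by eventually_elim (use util_sub cl_eq in auto)
    qed
    finally show ?thesis unfolding EU_def .
  qed
  have Usub: "U \<theta> \<ge> U \<theta>' + (\<theta> - \<theta>') * cb \<theta>'"
    if th: "\<theta> \<in> {tlo..thi}" and th': "\<theta>' \<in> {tlo..thi}" for \<theta> \<theta>'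
    using sub[OF th th'] ic[OF th th'] unfolding U_def by linarith
  have cbmono: "mono_on {tlo..thi} cb"
    unfolding mono_on_def
  proof (intro allI impI)
    fix r s assume rs: "r \<in> {tlo..thi} \<and> s \<in> {tlo..thi} \<and> r \<le> s"
    show "cb r \<le> cb s"
    proof (cases "r = s")
      case False
      hence lt: "r < s" using rs by simp
      have "(s - r) * cb r \<le> (s - r) * cb s"
        using Usub[of s r] Usub[of r s] rs by (simp add: algebra_simps)
      thus ?thesis using lt by simp
    qed simp
  qed
  have cb_tlo: "cb tlo = e"
  proof -
    have th: "tlo \<in> {tlo..thi}" using tle by simp
    interpret prob_space "X tlo" by (rule ps[OF th])
    have "AE a in X tlo. cl tlo a = e"
      using ae[OF th] ae0 by eventually_elim (use e_range in \<open>auto simp: cl_def\<close>)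
    hence "cb tlo = (\<integral>a. e \<partial>X tlo)" unfolding cb_def
      by (intro integral_cong_AE) (use clm[OF th] in auto)
    also have "\<dots> = e" using prob_space by simp
    finally show ?thesis .
  qed
  have cbr: "cb \<theta> \<in> {e..xh}" if th: "\<theta> \<in> {tlo..thi}" for \<theta>
  proof -
    interpret prob_space "X \<theta>" by (rule ps[OF th])
    have "cb \<theta> \<le> xh" unfolding cb_def by (rule integral_le_const[OF ci[OF th]]) (use clr in auto)
    moreover have "cb tlo \<le> cb \<theta>" using cbmono th tle unfolding mono_on_def by auto
    ultimately show ?thesis using cb_tlo by simp
  qed
  have Uint: "U \<theta> = U tlo + integral {tlo..\<theta>} cb" if th: "\<theta> \<in> {tlo..thi}" for \<theta>
  proof -
    have "(cb has_integral (U \<theta> - U tlo)) {tlo..\<theta>}"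
    proof (rule subgrad_integral)
      show "tlo \<le> \<theta>" using th by simp
      show "mono_on {tlo..\<theta>} cb" by (rule mono_on_subset[OF cbmono]) (use th in auto)
      fix s t assume "s \<in> {tlo..\<theta>}" "t \<in> {tlo..\<theta>}"
      thus "U s + (t - s) * cb s \<le> U t" using Usub th by auto
    qed
    hence "integral {tlo..\<theta>} cb = U \<theta> - U tlo" by (rule integral_unique)
    thus ?thesis by linarith
  qed
  have EUb: "EU v (X \<theta>) \<theta> \<le> v (cb \<theta>) + \<theta> * cb \<theta>" if th: "\<theta> \<in> {tlo..thi}" for \<theta>
  proof -
    interpret prob_space "X \<theta>" by (rule ps[OF th])
    obtain Bv where Bv: "\<And>x. x \<in> {0..xh} \<Longrightarrow> \<bar>v x\<bar> \<le> Bv" using v_bound by blast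
    have vm: "(\<lambda>a. v (cl \<theta> a)) \<in> borel_measurable (X \<theta>)" by (rule vcomp_meas_gen[OF clm[OF th] clr])
    have vi: "integrable (X \<theta>) (\<lambda>a. v (cl \<theta> a))"
      by (rule integrable_const_bound[where B=Bv]) (use vm clr Bv in auto)
    have "EU v (X \<theta>) \<theta> = (\<integral>a. v (cl \<theta> a) + \<theta> * cl \<theta> a \<partial>X \<theta>)"
      unfolding EU_def
    proof (rule integral_cong_AE)
      show "(\<lambda>a. util v a \<theta>) \<in> borel_measurable (X \<theta>)" by (rule um[OF th])
      show "(\<lambda>a. v (cl \<theta> a) + \<theta> * cl \<theta> a) \<in> borel_measurable (X \<theta>)"
        by (intro borel_measurable_add borel_measurable_times vm clm[OF th] borel_measurable_const)
      show "AE a in X \<theta>. util v a \<theta> = v (cl \<theta> a) + \<theta> * cl \<theta> a"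
        using ae[OF th] by eventually_elim (use util_max(1) cl_eq in auto)
    qed
    also have "\<dots> = (\<integral>a. v (cl \<theta> a) \<partial>X \<theta>) + \<theta> * cb \<theta>"
      unfolding cb_def using vi ci[OF th] by simp
    also have "\<dots> \<le> v (cb \<theta>) + \<theta> * cb \<theta>"
      using jensen_v[OF ps[OF th] clm[OF th] clr] unfolding cb_def by simp
    finally show ?thesis .
  qed
  have cbm: "cb \<in> borel_measurable (lebesgue_on {tlo..thi})" by (rule mono_meas[OF cbmono])
  have cbr0: "\<And>\<theta>. \<theta> \<in> {tlo..thi} \<Longrightarrow> cb \<theta> \<in> {0..xh}" using cbr e_range by fastforce
  define B where "B \<theta> = (v (cb \<theta>) + \<theta> * cb \<theta>) * f \<theta>" for \<theta>
  have Bi: "B integrable_on {tlo..thi}" unfolding B_def by (rule surplus_int[OF cbm cbr0])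
  have cbb: "\<And>x. x \<in> {tlo..thi} \<Longrightarrow> 0 \<le> cb x \<and> cb x \<le> xh" using cbr0 by auto
  note ib = ibp[OF tle cbmono cbb fi fnn fint1]
  have Ueq: "U \<theta> * f \<theta> = U tlo * f \<theta> + integral {tlo..\<theta>} cb * f \<theta>" if "\<theta> \<in> {tlo..thi}" for \<theta>
    using Uint[OF that] by (simp add: algebra_simps)
  have Ui0: "(\<lambda>\<theta>. U tlo * f \<theta> + integral {tlo..\<theta>} cb * f \<theta>) integrable_on {tlo..thi}"
    by (rule integrable_add[OF integrable_on_mult_right[OF fi] ib(1)])
  have Ui: "(\<lambda>\<theta>. U \<theta> * f \<theta>) integrable_on {tlo..thi}"
    using integrable_eq[OF Ui0] Ueq by metis
  have intU: "integral {tlo..thi} (\<lambda>\<theta>. U \<theta> * f \<theta>) = U tlo + integral {tlo..thi} (\<lambda>z. cb z * (1 - integral {tlo..z} f))"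
  proof -
    have "integral {tlo..thi} (\<lambda>\<theta>. U \<theta> * f \<theta>) = integral {tlo..thi} (\<lambda>\<theta>. U tlo * f \<theta> + integral {tlo..\<theta>} cb * f \<theta>)"
      by (rule integral_cong) (rule Ueq)
    also have "\<dots> = integral {tlo..thi} (\<lambda>\<theta>. U tlo * f \<theta>) + integral {tlo..thi} (\<lambda>\<theta>. integral {tlo..\<theta>} cb * f \<theta>)"
      by (rule integral_add[OF integrable_on_mult_right[OF fi] ib(1)])
    also have "integral {tlo..thi} (\<lambda>\<theta>. U tlo * f \<theta>) = U tlo"
      using integral_mult[OF fi, of "U tlo"] fint1 by simp
    finally show ?thesis using ib(3) by simp
  qed
  have qU: "integral {tlo..thi} (\<lambda>\<theta>. q \<theta> * f \<theta>) + integral {tlo..thi} (\<lambda>\<theta>. U \<theta> * f \<theta>) \<le> integral {tlo..thi} B"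
  proof -
    have "integral {tlo..thi} (\<lambda>\<theta>. q \<theta> * f \<theta>) + integral {tlo..thi} (\<lambda>\<theta>. U \<theta> * f \<theta>)
        = integral {tlo..thi} (\<lambda>\<theta>. q \<theta> * f \<theta> + U \<theta> * f \<theta>)"
      by (rule integral_add[OF qi Ui, symmetric])
    also have "\<dots> \<le> integral {tlo..thi} B"
    proof (rule integral_le[OF integrable_add[OF qi Ui] Bi])
      fix \<theta> assume th: "\<theta> \<in> {tlo..thi}"
      have "q \<theta> * f \<theta> + U \<theta> * f \<theta> = EU v (X \<theta>) \<theta> * f \<theta>" unfolding U_def by (simp add: algebra_simps)
      also have "\<dots> \<le> (v (cb \<theta>) + \<theta> * cb \<theta>) * f \<theta>" by (rule mult_right_mono[OF EUb[OF th] fnn[OF th]])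
      finally show "q \<theta> * f \<theta> + U \<theta> * f \<theta> \<le> B \<theta>" unfolding B_def .
    qed
    finally show ?thesis .
  qed
  have U0: "0 \<le> U tlo" unfolding U_def using ir[of tlo] tle by simp
  define Q where "Q \<theta> = (v (cb \<theta>) + cb \<theta> * phi \<theta>) * f \<theta>" for \<theta>
  have Qeq: "Q \<theta> = B \<theta> - cb \<theta> * (1 - integral {tlo..\<theta>} f)" if "\<theta> \<in> {tlo..thi}" for \<theta>
    unfolding Q_def B_def phi_eq[OF that] Fi_def ..
  have Qi0: "(\<lambda>\<theta>. B \<theta> - cb \<theta> * (1 - integral {tlo..\<theta>} f)) integrable_on {tlo..thi}"
    by (rule integrable_diff[OF Bi ib(2)])
  have Qi: "Q integrable_on {tlo..thi}" using integrable_eq[OF Qi0] Qeq by metis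
  have intQ: "integral {tlo..thi} Q = integral {tlo..thi} B - integral {tlo..thi} (\<lambda>z. cb z * (1 - integral {tlo..z} f))"
  proof -
    have "integral {tlo..thi} Q = integral {tlo..thi} (\<lambda>\<theta>. B \<theta> - cb \<theta> * (1 - integral {tlo..\<theta>} f))"
      by (rule integral_cong) (rule Qeq)
    also have "\<dots> = integral {tlo..thi} B - integral {tlo..thi} (\<lambda>z. cb z * (1 - integral {tlo..z} f))"
      by (rule Henstock_Kurzweil_Integration.integral_diff[OF Bi ib(2)])
    finally show ?thesis .
  qed
  have QR: "integral {tlo..thi} Q \<le> integral {tlo..thi} R"
  proof (rule integral_le[OF Qi rev_p(2)])
    fix \<theta> assume th: "\<theta> \<in> {tlo..thi}"
    have "v (cb \<theta>) + phi \<theta> * cb \<theta> \<le> v (xs \<theta>) + phi \<theta> * xs \<theta>"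
      using xs_amax[of \<theta>] cbr[OF th] unfolding amax_def by blast
    hence "v (cb \<theta>) + cb \<theta> * phi \<theta> \<le> v (xs \<theta>) + xs \<theta> * phi \<theta>" by (simp add: mult.commute)
    thus "Q \<theta> \<le> R \<theta>" unfolding Q_def R_def by (rule mult_right_mono[OF _ fnn[OF th]])
  qed
  have "revenue tlo thi f q = integral {tlo..thi} (\<lambda>\<theta>. q \<theta> * f \<theta>)" unfolding revenue_def ..
  also have "\<dots> \<le> integral {tlo..thi} Q" using qU intU intQ U0 by linarith
  also have "\<dots> \<le> integral {tlo..thi} R" by (rule QR)
  finally show ?thesis .
qed

end


theorem lemma3:
  fixes tlo thi xh m M :: real and F f v :: "real \<Rightarrow> real" and xs :: "real \<Rightarrow> real"
  assumes "tlo < thi" and "0 < xh"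
    \<comment> \<open>(A1)\<close>
    and "strictly_concave_on {0..xh} v"
    and "\<exists>v'. continuous_on {0..xh} v' \<and>
               (\<forall>x\<in>{0..xh}. (v has_real_derivative v' x) (at x within {0..xh}))"
    and "v 0 = 0"
    \<comment> \<open>F is the CDF with density f on [tlo, thi]\<close>
    and "f integrable_on {tlo..thi}"
    and "\<forall>\<theta>\<in>{tlo..thi}. F \<theta> = integral {tlo..\<theta>} f"
    and "F thi = 1"
    \<comment> \<open>(A2)\<close>
    and "0 < m" and "\<forall>\<theta>\<in>{tlo..thi}. m \<le> f \<theta> \<and> f \<theta> \<le> M"
    and "strict_mono_on {tlo..thi} (\<lambda>\<theta>. \<theta> - (1 - F \<theta>) / f \<theta>)"
    \<comment> \<open>x*(theta): the maximizer of the virtual surplus over [x^e(tlo), xbar]\<close>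
    and xs_def: "\<forall>\<theta>. xs \<theta> = (THE x. x \<in> {xeff v xh tlo..xh} \<and>
          (\<forall>y\<in>{xeff v xh tlo..xh}.
             v y + y * (\<theta> - (1 - F \<theta>) / f \<theta>) \<le> v x + x * (\<theta> - (1 - F \<theta>) / f \<theta>)))"
  shows
    "(\<forall>\<theta>\<in>{tlo..thi}. xs \<theta> \<in> {xeff v xh tlo..xh} \<and>
        (\<forall>y\<in>{xeff v xh tlo..xh}. y \<noteq> xs \<theta> \<longrightarrow>
           v y + y * (\<theta> - (1 - F \<theta>) / f \<theta>) < v (xs \<theta>) + xs \<theta> * (\<theta> - (1 - F \<theta>) / f \<theta>)))
     \<and> (\<forall>\<theta>\<in>{tlo..thi}. \<forall>y\<in>{0..xs \<theta>}. y \<noteq> xs \<theta> \<longrightarrow>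
           v y + \<theta> * y < v (xs \<theta>) + \<theta> * xs \<theta>)
     \<and> (let p = (\<lambda>\<theta>. util v (xs \<theta>) \<theta> - integral {tlo..\<theta>} xs) in
          feasible tlo thi xh v (\<lambda>\<theta>. return borel (xs \<theta>)) p
        \<and> (\<lambda>\<theta>. p \<theta> * f \<theta>) integrable_on {tlo..thi}
        \<and> (\<forall>X q. feasible tlo thi xh v X q \<and> (\<lambda>\<theta>. q \<theta> * f \<theta>) integrable_on {tlo..thi}
               \<longrightarrow> revenue tlo thi f q \<le> revenue tlo thi f p))"

proof -
  obtain v' where v': "continuous_on {0..xh} v'" "\<forall>x\<in>{0..xh}. (v has_real_derivative v' x) (at x within {0..xh})"
    using assms(4) by blast
  interpret mdl tlo thi xh v v' F f xs m
  proof
    show "tlo < thi" "0 < xh" "strictly_concave_on {0..xh} v" "f integrable_on {tlo..thi}" "F thi = 1" "0 < m"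
      using assms by auto
    show "\<And>x. x \<in> {0..xh} \<Longrightarrow> (v has_real_derivative v' x) (at x within {0..xh})" using v' by auto
    show "\<And>\<theta>. \<theta> \<in> {tlo..thi} \<Longrightarrow> F \<theta> = integral {tlo..\<theta>} f" using assms by auto
    show "\<And>\<theta>. \<theta> \<in> {tlo..thi} \<Longrightarrow> m \<le> f \<theta>" using assms by auto
    show "strict_mono_on {tlo..thi} (\<lambda>\<theta>. \<theta> - (1 - F \<theta>) / f \<theta>)" using assms by auto
    show "\<And>\<theta>. xs \<theta> = (THE x. x \<in> {xeff v xh tlo..xh} \<and>
          (\<forall>y\<in>{xeff v xh tlo..xh}.
             v y + y * (\<theta> - (1 - F \<theta>) / f \<theta>) \<le> v x + x * (\<theta> - (1 - F \<theta>) / f \<theta>)))"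
      using xs_def by auto
  qed
  have c1: "\<forall>\<theta>\<in>{tlo..thi}. xs \<theta> \<in> {xeff v xh tlo..xh} \<and>
        (\<forall>y\<in>{xeff v xh tlo..xh}. y \<noteq> xs \<theta> \<longrightarrow>
           v y + y * (\<theta> - (1 - F \<theta>) / f \<theta>) < v (xs \<theta>) + xs \<theta> * (\<theta> - (1 - F \<theta>) / f \<theta>))"
  proof (intro ballI conjI impI)
    fix \<theta> y assume "y \<in> {xeff v xh tlo..xh}" "y \<noteq> xs \<theta>"
    hence "v y + phi \<theta> * y < v (xs \<theta>) + phi \<theta> * xs \<theta>"
      using amax_strict[OF sc e_range(1) order_refl xs_amax] by blast
    thus "v y + y * (\<theta> - (1 - F \<theta>) / f \<theta>) < v (xs \<theta>) + xs \<theta> * (\<theta> - (1 - F \<theta>) / f \<theta>)"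
      unfolding phi_def by (simp add: mult.commute)
  qed (use xs_range in auto)
  have c2: "\<forall>\<theta>\<in>{tlo..thi}. \<forall>y\<in>{0..xs \<theta>}. y \<noteq> xs \<theta> \<longrightarrow>
           v y + \<theta> * y < v (xs \<theta>) + \<theta> * xs \<theta>"
    using claim2 by blast
  have peq: "(\<lambda>\<theta>. util v (xs \<theta>) \<theta> - integral {tlo..\<theta>} xs) = pp"
    unfolding pp_def Ixs_def ..
  have c3: "feasible tlo thi xh v (\<lambda>\<theta>. return borel (xs \<theta>)) pp
        \<and> (\<lambda>\<theta>. pp \<theta> * f \<theta>) integrable_on {tlo..thi}
        \<and> (\<forall>X q. feasible tlo thi xh v X q \<and> (\<lambda>\<theta>. q \<theta> * f \<theta>) integrable_on {tlo..thi}
               \<longrightarrow> revenue tlo thi f q \<le> revenue tlo thi f pp)"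
    using feas_p rev_p opt by auto
  show ?thesis unfolding Let_def peq using c1 c2 c3 by blast
qed

end
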